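(* Let $p$ be an odd prime, $D=\mathbb{Z}_{(p)}$, and $A=D\oplus D\mathbf{i}\oplus D\mathbf{j}\oplus D\mathbf{k}$ with $\mathbf{i}^2=\mathbf{j}^2=-1$, $\mathbf{i}\mathbf{j}=\mathbf{k}=-\mathbf{j}\mathbf{i}$. Then $\textnormal{Int}_{\mathbb{Q}}(A)=\textnormal{Int}_{\mathbb{Q}}(M_2(D))$, but $A\not\cong M_2(D)$.
   Context: $\textnormal{Int}_{\mathbb{Q}}(A)=\{f\in\mathbb{Q}[X]\mid f(A)\subseteq A\}$ with evaluation in $\mathbb{Q}\otimes_D A$; similarly for $M_2(D)$, the $2\times 2$ matrices over $D$. *)

theory Defs
  imports "HOL-Analysis.Analysis" "HOL-Computational_Algebra.Polynomial"
begin

definition Zloc :: "nat \<Rightarrow> rat set" where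
  "Zloc p = {q. \<exists>a b :: int. b \<noteq> 0 \<and> \<not> int p dvd b \<and> q = of_int a / of_int b}"

text \<open>Rational Hamilton quaternions Q (x) A, coordinates w.r.t. 1, i, j, k.\<close>
datatype quat = Quat rat rat rat rat

fun qadd :: "quat \<Rightarrow> quat \<Rightarrow> quat" where
  "qadd (Quat a1 b1 c1 d1) (Quat a2 b2 c2 d2) = Quat (a1 + a2) (b1 + b2) (c1 + c2) (d1 + d2)"

fun qmul :: "quat \<Rightarrow> quat \<Rightarrow> quat" where
  "qmul (Quat a1 b1 c1 d1) (Quat a2 b2 c2 d2) =
     Quat (a1*a2 - b1*b2 - c1*c2 - d1*d2)
          (a1*b2 + b1*a2 + c1*d2 - d1*c2)
          (a1*c2 - b1*d2 + c1*a2 + d1*b2)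
          (a1*d2 + b1*c2 - c1*b2 + d1*a2)"

definition qone :: quat where "qone = Quat 1 0 0 0"

definition qscal :: "rat \<Rightarrow> quat" where "qscal c = Quat c 0 0 0"

definition qeval :: "rat poly \<Rightarrow> quat \<Rightarrow> quat" where
  "qeval f x = foldr (\<lambda>c acc. qadd (qscal c) (qmul acc x)) (coeffs f) (Quat 0 0 0 0)"

definition quat_order :: "nat \<Rightarrow> quat set" where
  "quat_order p = {Quat a b c d | a b c d. a \<in> Zloc p \<and> b \<in> Zloc p \<and> c \<in> Zloc p \<and> d \<in> Zloc p}"

definition IntQ_quat :: "nat \<Rightarrow> rat poly set" where
  "IntQ_quat p = {f. \<forall>x \<in> quat_order p. qeval f x \<in> quat_order p}"

definition meval :: "rat poly \<Rightarrow> rat^2^2 \<Rightarrow> rat^2^2" where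
  "meval f M = foldr (\<lambda>c acc. mat c + acc ** M) (coeffs f) (mat 0)"

definition M2 :: "nat \<Rightarrow> (rat^2^2) set" where
  "M2 p = {M. \<forall>i j. M $ i $ j \<in> Zloc p}"

definition IntQ_M2 :: "nat \<Rightarrow> rat poly set" where
  "IntQ_M2 p = {f. \<forall>M \<in> M2 p. meval f M \<in> M2 p}"

end

theory Submission
  imports Defs
begin



locale pctx = fixes p :: nat assumes pp: "prime p" and po: "odd p"
begin

abbreviation "D \<equiv> Zloc p"

lemma pint: "prime (int p)" using pp by simp

lemma D_intro: "b \<noteq> 0 \<Longrightarrow> \<not> int p dvd b \<Longrightarrow> of_int a / of_int b \<in> D"
  unfolding Zloc_def by blast

lemma D_of_int[simp]: "of_int a \<in> D"
  using D_intro[of 1 a] prime_gt_1_nat[OF pp] by simp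

lemma D_0[simp]: "0 \<in> D" and D_1[simp]: "1 \<in> D"
  using D_of_int[of 0] D_of_int[of 1] by auto

lemma D_nat[simp]: "of_nat n \<in> D" using D_of_int[of "int n"] by simp

lemma D_add[simp]: "x \<in> D \<Longrightarrow> y \<in> D \<Longrightarrow> x + y \<in> D"
proof -
  assume "x \<in> D" "y \<in> D"
  then obtain a b c d where h: "b \<noteq> 0" "\<not> int p dvd b" "x = of_int a / of_int b"
     "d \<noteq> 0" "\<not> int p dvd d" "y = of_int c / of_int d" unfolding Zloc_def by auto
  have "x + y = of_int (a*d + c*b) / of_int (b*d)" using h by (simp add: field_simps)
  moreover have "\<not> int p dvd b*d" using h pint by (simp add: prime_dvd_mult_iff)
  ultimately show ?thesis using h unfolding Zloc_def by (intro CollectI exI[of _ "a*d+c*b"] exI[of _ "b*d"]) auto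
qed

lemma D_mult[simp]: "x \<in> D \<Longrightarrow> y \<in> D \<Longrightarrow> x * y \<in> D"
proof -
  assume "x \<in> D" "y \<in> D"
  then obtain a b c d where h: "b \<noteq> 0" "\<not> int p dvd b" "x = of_int a / of_int b"
     "d \<noteq> 0" "\<not> int p dvd d" "y = of_int c / of_int d" unfolding Zloc_def by auto
  have "x * y = of_int (a*c) / of_int (b*d)" using h by (simp add: field_simps)
  moreover have "\<not> int p dvd b*d" using h pint by (simp add: prime_dvd_mult_iff)
  ultimately show ?thesis using h unfolding Zloc_def by (intro CollectI exI[of _ "a*c"] exI[of _ "b*d"]) auto
qed

lemma D_uminus[simp]: "x \<in> D \<Longrightarrow> - x \<in> D"
  using D_mult[of "-1" x] D_of_int[of "-1"] by simp

lemma D_diff[simp]: "x \<in> D \<Longrightarrow> y \<in> D \<Longrightarrow> x - y \<in> D"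
  using D_add[of x "-y"] by simp

lemma D_power[simp]: "x \<in> D \<Longrightarrow> x ^ n \<in> D"
  by (induction n) auto

lemma D_numeral[simp]: "numeral n \<in> D" using D_nat[of "numeral n"] by simp

lemma D_half[simp]: "1/2 \<in> D"
proof -
  have "\<not> int p dvd 2"
  proof
    assume "int p dvd 2" then have "p dvd 2" by presburger
    then have "p \<le> 2" by (simp add: dvd_imp_le)
    with pp po show False using prime_ge_2_nat[OF pp] by (cases "p = 2") auto
  qed
  then show ?thesis unfolding Zloc_def by (intro CollectI exI[of _ 1] exI[of _ 2]) auto
qed

lemma D_inv_p: "1 / of_nat p \<notin> D"
proof
  assume "1 / of_nat p \<in> D"
  then obtain a b where h: "b \<noteq> 0" "\<not> int p dvd b" "1 / (of_nat p::rat) = of_int a / of_int b"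
    unfolding Zloc_def by auto
  have "p \<noteq> 0" using pp by auto
  then have "of_int b = (of_int (int p * a) :: rat)" using h(1,3) by (simp add: field_simps)
  then have "b = int p * a" by linarith
  then show False using h(2) by simp
qed

lemma D_valuation: "x \<in> D \<or> 1 / x \<in> D"
proof -
  obtain a b where q: "quotient_of x = (a, b)" by fastforce
  have x: "x = of_int a / of_int b" and b: "b > 0" and cop: "coprime a b"
    using quotient_of_div[OF q] quotient_of_denom_pos[OF q] quotient_of_coprime[OF q] by auto
  show ?thesis
  proof (cases "int p dvd b")
    case False then show ?thesis using x b D_intro[of b a] by auto
  next
    case True
    have "\<not> int p dvd a"
    proof
      assume "int p dvd a"
      then have "is_unit (int p)" using coprime_common_divisor[OF cop _ True] by blast
      with pint show False using not_prime_unit by blast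
    qed
    moreover have "a \<noteq> 0" using `\<not> int p dvd a` by auto
    moreover have "1 / x = of_int b / of_int a" using x by simp
    ultimately show ?thesis using D_intro[of a b] by auto
  qed
qed

lemma D_nonunit: "w \<in> D \<Longrightarrow> 1 / w \<notin> D \<Longrightarrow> w / of_nat p \<in> D"
proof -
  assume "w \<in> D" "1 / w \<notin> D"
  then obtain a b where h: "b \<noteq> 0" "\<not> int p dvd b" "w = of_int a / of_int b"
    unfolding Zloc_def by auto
  have "int p dvd a"
  proof (rule ccontr)
    assume "\<not> int p dvd a"
    then have "a \<noteq> 0" by auto
    then have "1 / w \<in> D" using h `\<not> int p dvd a` D_intro[of a b] by auto
    then show False using `1/w \<notin> D` by simp
  qed
  then obtain a' where "a = int p * a'" by blast
  then have "w / of_nat p = of_int a' / of_int b" using h pp by (auto simp: field_simps prime_gt_0_nat)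
  then show ?thesis using h unfolding Zloc_def by auto
qed

definition unit :: "rat \<Rightarrow> bool" where "unit u \<longleftrightarrow> u \<in> D \<and> u \<noteq> 0 \<and> 1 / u \<in> D"

lemma unit_perturb:
  assumes u: "unit u" and y: "y \<in> D"
  shows "unit (u + of_nat p * y)"
proof -
  have p0: "(of_nat p :: rat) \<noteq> 0" using pp by auto
  have nd: "(u + of_nat p * y) / of_nat p \<notin> D"
  proof
    assume "(u + of_nat p * y) / of_nat p \<in> D"
    then have "(u + of_nat p * y) / of_nat p - y \<in> D" using y by simp
    also have "(u + of_nat p * y) / of_nat p - y = u / of_nat p" using p0 by (simp add: field_simps)
    finally have "u / of_nat p * (1/u) \<in> D" using u unfolding unit_def by (intro D_mult) auto
    moreover have "u / of_nat p * (1/u) = 1 / of_nat p" using u unfolding unit_def by simp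
    ultimately show False using D_inv_p by simp
  qed
  have w: "u + of_nat p * y \<in> D" using u y unfolding unit_def by simp
  show ?thesis unfolding unit_def using nd w D_nonunit[OF w] by auto
qed

end


context pctx begin

lemma two_squares_mod:
  fixes t :: int
  shows "\<exists>c d. int p dvd (c^2 + d^2 - t)"
proof -
  define P where "P = int p"
  have P3: "P \<ge> 3" using prime_ge_2_nat[OF pp] po unfolding P_def by presburger
  define h where "h = (P - 1) div 2"
  have h: "2*h + 1 = P" "h \<ge> 0" unfolding h_def using po P3 unfolding P_def by presburger+
  have pP: "prime P" unfolding P_def using pint .
  define f1 where "f1 x = x^2 mod P" for x :: int
  define f2 where "f2 y = (t - y^2) mod P" for y :: int
  have key: "x = x'" if "x \<in> {0..h}" "x' \<in> {0..h}" "P dvd (x^2 - x'^2)" for x x'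
  proof -
    have "x^2 - x'^2 = (x - x') * (x + x')" by (simp add: algebra_simps power2_eq_square)
    then have "P dvd (x - x') \<or> P dvd (x + x')" using that(3) pP by (simp add: prime_dvd_mult_iff)
    then show ?thesis
    proof
      assume "P dvd (x - x')"
      moreover have "\<bar>x - x'\<bar> < P" using that(1,2) h by auto
      ultimately show ?thesis using dvd_imp_le_int[of "x - x'" P] by (cases "x = x'") auto
    next
      assume "P dvd (x + x')"
      moreover have "x + x' < P" "x + x' \<ge> 0" using that(1,2) h by auto
      ultimately have "x + x' = 0" using zdvd_imp_le[of P "x+x'"] by (cases "x + x' = 0") auto
      then show ?thesis using that(1,2) by auto
    qed
  qed
  have inj1: "inj_on f1 {0..h}"
  proof (rule inj_onI)
    fix x x' assume "x \<in> {0..h}" "x' \<in> {0..h}" "f1 x = f1 x'"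
    then show "x = x'" using key unfolding f1_def by (simp add: mod_eq_dvd_iff)
  qed
  have inj2: "inj_on f2 {0..h}"
  proof (rule inj_onI)
    fix x x' assume a: "x \<in> {0..h}" "x' \<in> {0..h}" "f2 x = f2 x'"
    then have "P dvd (t - x^2) - (t - x'^2)" unfolding f2_def by (simp add: mod_eq_dvd_iff)
    then have "P dvd x'^2 - x^2" by simp
    then show "x = x'" using key[OF a(2,1)] by simp
  qed
  have c1: "card (f1 ` {0..h}) = h + 1" and c2: "card (f2 ` {0..h}) = h + 1"
    using card_image[OF inj1] card_image[OF inj2] h by auto
  have sub: "f1 ` {0..h} \<union> f2 ` {0..h} \<subseteq> {0..<P}"
    unfolding f1_def f2_def using P3 by auto
  have "card (f1 ` {0..h} \<union> f2 ` {0..h}) \<le> card {0..<P}"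
    by (rule card_mono[OF _ sub]) simp
  then have cu: "card (f1 ` {0..h} \<union> f2 ` {0..h}) \<le> nat P" by simp
  have "card (f1 ` {0..h}) + card (f2 ` {0..h}) = card (f1 ` {0..h} \<union> f2 ` {0..h}) + card (f1 ` {0..h} \<inter> f2 ` {0..h})"
    by (rule card_Un_Int) auto
  then have "card (f1 ` {0..h} \<inter> f2 ` {0..h}) \<noteq> 0" using c1 c2 cu h by linarith
  then obtain z where "z \<in> f1 ` {0..h}" "z \<in> f2 ` {0..h}" by (metis card.empty disjoint_iff)
  then obtain x y where "x^2 mod P = (t - y^2) mod P" unfolding f1_def f2_def by auto
  then have "P dvd x^2 - (t - y^2)" by (simp add: mod_eq_dvd_iff)
  then show ?thesis unfolding P_def by (intro exI[of _ x] exI[of _ y]) (simp add: algebra_simps)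
qed

lemma int_approx:
  assumes "s \<in> D" shows "\<exists>t::int. (s - of_int t) / of_nat p \<in> D"
proof -
  obtain m n where h: "n \<noteq> 0" "\<not> int p dvd n" "s = of_int m / of_int n"
    using assms unfolding Zloc_def by auto
  have "coprime (int p) n" using h(2) pint by (simp add: prime_imp_coprime)
  then have "gcd n (int p) = 1" by (simp add: coprime_iff_gcd_eq_1 gcd.commute)
  then obtain u v where uv: "u * n + v * int p = 1" using bezout_int[of n "int p"] by auto
  have "(s - of_int (m*u)) / of_nat p = of_int (m * v) / of_int n"
  proof -
    have e: "of_int u * of_int n + of_int v * of_nat p = (1::rat)" using arg_cong[OF uv, of rat_of_int] by simp
    have p0: "(of_nat p::rat) \<noteq> 0" using pp by auto
    have "of_int m - of_int m * of_int u * of_int n = (of_int m * of_int v * of_nat p :: rat)"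
      using e by algebra
    then show ?thesis using h p0 by (simp add: field_simps)
  qed
  then have "(s - of_int (m * u)) / of_nat p \<in> D" using D_intro[of "n" "m * v"] h by simp
  then show ?thesis by blast
qed

end


context pctx begin

lemma unit_D: "unit u \<Longrightarrow> u \<in> D" and unit_inv: "unit u \<Longrightarrow> 1/u \<in> D" and unit_nz: "unit u \<Longrightarrow> u \<noteq> 0"
  unfolding unit_def by auto

lemma newton:
  assumes b: "unit b" and cd: "c \<in> D" "d \<in> D" "s \<in> D" and e': "e' \<in> D" and e: "e = of_nat p * e'" "e \<noteq> 0"
    and r: "(b^2+c^2+d^2-s)/e \<in> D"
  shows "\<exists>b'. unit b' \<and> (b'^2+c^2+d^2-s)/e^2 \<in> D"
proof -
  define r where "r = (b^2+c^2+d^2-s)/e"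
  define y where "y = - e' * r * (1/2) * (1/b)"
  have rD: "r \<in> D" unfolding r_def using r .
  have yD: "y \<in> D" unfolding y_def using rD e' unit_inv[OF b] by (intro D_mult D_uminus D_half) auto
  have b0: "b \<noteq> 0" using unit_nz[OF b] .
  have re: "b^2+c^2+d^2-s = e * r" unfolding r_def using e by simp
  have Y: "of_nat p * y = - e * r * (1/2) * (1/b)" unfolding y_def e by simp
  have Y1: "2*b*(of_nat p * y) = - e * r" unfolding Y using b0 by simp
  have Y2: "(of_nat p * y)^2 = e^2 * (r * (1/2) * (1/b))^2" unfolding Y by (simp add: power2_eq_square)
  have "(b + of_nat p * y)^2 + c^2 + d^2 - s = (b^2+c^2+d^2-s) + 2*b*(of_nat p * y) + (of_nat p * y)^2"
    by (simp add: power2_eq_square algebra_simps)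
  also have "\<dots> = e^2 * (r * (1/2) * (1/b))^2" unfolding Y1 Y2 re by simp
  finally have eq: "(b + of_nat p * y)^2 + c^2 + d^2 - s = e^2 * (r * (1/2) * (1/b))^2" .
  have "((b + of_nat p * y)^2 + c^2 + d^2 - s)/e^2 = (r * (1/2) * (1/b))^2"
    unfolding eq using e(2) by simp
  moreover have "(r * (1/2) * (1/b))^2 \<in> D" using rD unit_inv[OF b] by (intro D_power D_mult D_half) auto
  ultimately have "((b + of_nat p * y)^2 + c^2 + d^2 - s)/e^2 \<in> D" by simp
  then show ?thesis using unit_perturb[OF b yD] by blast
qed

lemma density:
  assumes s: "s \<in> D"
  shows "\<exists>b c d. unit b \<and> c \<in> D \<and> d \<in> D \<and> (b^2+c^2+d^2-s)/ (of_nat p)^(2^n) \<in> D"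
proof (induction n)
  case 0
  obtain t where t: "(s - of_int t) / of_nat p \<in> D" using int_approx[OF s] by blast
  obtain c d where "int p dvd (c^2 + d^2 - (t - 1))" using two_squares_mod by blast
  then obtain k where k: "c^2 + d^2 - (t - 1) = int p * k" by blast
  have p0: "(of_nat p::rat) \<noteq> 0" using pp by auto
  have "rat_of_int (c^2 + d^2 - (t - 1)) = of_int (int p * k)" using k by simp
  then have k': "of_int c ^2 + of_int d^2 - (of_int t - 1) = (of_nat p * of_int k :: rat)" by simp
  have "(1^2 + (of_int c)^2 + (of_int d)^2 - s) / of_nat p = of_int k - (s - of_int t) / of_nat p"
    using k' p0 by (simp add: field_simps)
  moreover have "unit 1" unfolding unit_def by simp
  ultimately show ?case using t by (intro exI[of _ 1] exI[of _ "of_int c"] exI[of _ "of_int d"]) simp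
next
  case (Suc n)
  then obtain b c d where h: "unit b" "c \<in> D" "d \<in> D" "(b^2+c^2+d^2-s)/ (of_nat p)^(2^n) \<in> D" by blast
  have p0: "(of_nat p::rat) \<noteq> 0" using pp by auto
  have "(of_nat p::rat)^(2^n) = of_nat p * of_nat p ^ (2^n - 1)"
    by (simp add: power_eq_if[of _ "2^n"])
  from newton[OF h(1-3) s _ this _ h(4)] obtain b' where "unit b'"
    "(b'^2+c^2+d^2-s)/ ((of_nat p)^(2^n))^2 \<in> D" using p0 by auto
  moreover have "((of_nat p::rat)^(2^n))^2 = of_nat p ^ (2^Suc n)" by (simp add: power_mult[symmetric] mult.commute)
  ultimately show ?case using h by auto
qed

lemma density':
  assumes s: "s \<in> D"
  shows "\<exists>b c d. unit b \<and> c \<in> D \<and> d \<in> D \<and> (b^2+c^2+d^2-s)/ (of_nat p)^E \<in> D"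
proof -
  obtain b c d where h: "unit b" "c \<in> D" "d \<in> D" "(b^2+c^2+d^2-s)/ (of_nat p)^(2^E) \<in> D"
    using density[OF s] by blast
  have le: "E \<le> 2^E" using less_exp[of E] by simp
  have p0: "(of_nat p::rat) \<noteq> 0" using pp by auto
  have "(b^2+c^2+d^2-s)/ (of_nat p)^E = (b^2+c^2+d^2-s)/ (of_nat p)^(2^E) * of_nat p ^ (2^E - E)"
    using le p0 by (simp add: power_diff)
  also have "\<dots> \<in> D" by (intro D_mult D_power D_nat h(4))
  finally show ?thesis using h by blast
qed

end



definition pstep :: "rat \<Rightarrow> rat \<Rightarrow> rat \<Rightarrow> rat \<Rightarrow> rat\<times>rat \<Rightarrow> rat\<times>rat" where
  "pstep s a g c acc = (c + fst acc * a - s * snd acc * g, fst acc * g + snd acc * a)"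

definition H :: "rat \<Rightarrow> rat \<Rightarrow> rat \<Rightarrow> rat list \<Rightarrow> rat\<times>rat" where
  "H s a g cs = foldr (pstep s a g) cs (0,0)"

lemma qeval_H:
  assumes "s = x1^2 + x2^2 + x3^2"
  shows "foldr (\<lambda>c acc. qadd (qscal c) (qmul acc (Quat a (g*x1) (g*x2) (g*x3)))) cs (Quat 0 0 0 0)
    = Quat (fst (H s a g cs)) (snd (H s a g cs) * x1) (snd (H s a g cs) * x2) (snd (H s a g cs) * x3)"
  unfolding H_def
proof (induction cs)
  case Nil then show ?case by simp
next
  case (Cons c0 cs)
  show ?case unfolding foldr_Cons o_def Cons.IH
    apply (simp only: qmul.simps qadd.simps qscal_def pstep_def fst_conv snd_conv quat.inject)
    apply (unfold assms power2_eq_square)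
    apply (intro conjI)
    apply algebra+
    done
qed

definition mk2 :: "rat \<Rightarrow> rat \<Rightarrow> rat \<Rightarrow> rat \<Rightarrow> rat^2^2" where
  "mk2 a b c d = (\<chi> i j. if i = 1 then (if j = 1 then a else b) else (if j = 1 then c else d))"

lemma mk2_nth[simp]: "mk2 a b c d $ 1 $ 1 = a" "mk2 a b c d $ 1 $ 2 = b"
  "mk2 a b c d $ 2 $ 1 = c" "mk2 a b c d $ 2 $ 2 = d"
  unfolding mk2_def by auto

lemma mk2_eq: "M = mk2 (M$1$1) (M$1$2) (M$2$1) (M$2$2)"
  by (simp add: vec_eq_iff forall_2)

lemma mk2_mult: "mk2 a b c d ** mk2 a' b' c' d' = mk2 (a*a'+b*c') (a*b'+b*d') (c*a'+d*c') (c*b'+d*d')"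
  by (simp add: matrix_matrix_mult_def vec_eq_iff forall_2 sum_2)

lemma mk2_add: "mk2 a b c d + mk2 a' b' c' d' = mk2 (a+a') (b+b') (c+c') (d+d')"
  by (simp add: vec_eq_iff forall_2)

lemma mat_mk2: "mat c = mk2 c 0 0 c"
  by (simp add: vec_eq_iff forall_2 mat_def)

lemma mk2_inj: "mk2 a b c d = mk2 a' b' c' d' \<longleftrightarrow> a = a' \<and> b = b' \<and> c = c' \<and> d = d'"
  by (metis mk2_nth)

lemma meval_H:
  assumes "s = -(z^2 + x*y)"
  shows "foldr (\<lambda>c acc. mat c + acc ** mk2 (a+g*z) (g*x) (g*y) (a-g*z)) cs (mat 0)
    = mk2 (fst (H s a g cs) + snd (H s a g cs) * z) (snd (H s a g cs) * x) (snd (H s a g cs) * y) (fst (H s a g cs) - snd (H s a g cs) * z)"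
  unfolding H_def
proof (induction cs)
  case Nil then show ?case by (simp add: mat_mk2)
next
  case (Cons c0 cs)
  show ?case unfolding foldr_Cons o_def Cons.IH unfolding mat_mk2 mk2_mult mk2_add mk2_inj
    apply (simp only: pstep_def fst_conv snd_conv)
    apply (unfold assms power2_eq_square)
    apply (intro conjI)
    apply algebra+
    done
qed



context pctx begin

lemma H_cong:
  assumes K: "K \<noteq> 0" and cs: "\<forall>c\<in>set cs. K*c \<in> D" and D: "a \<in> D" "g \<in> D" "s \<in> D" "s' \<in> D"
    and ss: "(s - s')/K \<in> D"
  shows "K * fst (H s a g cs) \<in> D \<and> K * snd (H s a g cs) \<in> D \<and> K * fst (H s' a g cs) \<in> D \<and> K * snd (H s' a g cs) \<in> D
    \<and> fst (H s a g cs) - fst (H s' a g cs) \<in> D \<and> snd (H s a g cs) - snd (H s' a g cs) \<in> D"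
  using cs unfolding H_def
proof (induction cs)
  case Nil then show ?case by simp
next
  case (Cons c cs)
  obtain F S where FS: "foldr (pstep s a g) cs (0,0) = (F,S)" by fastforce
  obtain F' S' where FS': "foldr (pstep s' a g) cs (0,0) = (F',S')" by fastforce
  from Cons FS FS' have ih: "K*F \<in> D" "K*S \<in> D" "K*F' \<in> D" "K*S' \<in> D" "F - F' \<in> D" "S - S' \<in> D" "K*c \<in> D" by auto
  have e1: "K * (c + F * a - s * S * g) = K*c + (K*F)*a - s*(K*S)*g" by (simp add: algebra_simps)
  have e2: "K * (F * g + S * a) = (K*F)*g + (K*S)*a" by (simp add: algebra_simps)
  have e3: "K * (c + F' * a - s' * S' * g) = K*c + (K*F')*a - s'*(K*S')*g" by (simp add: algebra_simps)
  have e4: "K * (F' * g + S' * a) = (K*F')*g + (K*S')*a" by (simp add: algebra_simps)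
  have k: "((s - s')/K)*(K*S') = (s-s')*S'" using K by simp
  have e5: "(c + F * a - s * S * g) - (c + F' * a - s' * S' * g) = (F - F')*a - g*(s*(S - S') + ((s - s')/K)*(K*S'))"
    unfolding k by (simp add: algebra_simps)
  have e6: "(F * g + S * a) - (F' * g + S' * a) = (F - F')*g + (S - S')*a" by (simp add: algebra_simps)
  note h1 = D_diff[OF D_add[OF ih(7) D_mult[OF ih(1) D(1)]] D_mult[OF D_mult[OF D(3) ih(2)] D(2)]]
  note h2 = D_add[OF D_mult[OF ih(1) D(2)] D_mult[OF ih(2) D(1)]]
  note h3 = D_diff[OF D_add[OF ih(7) D_mult[OF ih(3) D(1)]] D_mult[OF D_mult[OF D(4) ih(4)] D(2)]]
  note h4 = D_add[OF D_mult[OF ih(3) D(2)] D_mult[OF ih(4) D(1)]]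
  note h5 = D_diff[OF D_mult[OF ih(5) D(1)] D_mult[OF D(2) D_add[OF D_mult[OF D(3) ih(6)] D_mult[OF ss ih(4)]]]]
  note h6 = D_add[OF D_mult[OF ih(5) D(2)] D_mult[OF ih(6) D(1)]]
  show ?case unfolding foldr_Cons o_def FS FS' unfolding pstep_def fst_conv snd_conv e1 e2 e3 e4 e5 e6
    using h1 h2 h3 h4 h5 h6 by (intro conjI)
qed

lemma exp_D1: "n > 0 \<Longrightarrow> \<exists>E. (of_nat p)^E * (of_int m / of_nat n) \<in> D"
proof (induction n arbitrary: m rule: less_induct)
  case (less n)
  show ?case
  proof (cases "p dvd n")
    case False
    then have "\<not> int p dvd int n" by simp
    then have "of_int m / of_int (int n) \<in> D" using less.prems by (intro D_intro) auto
    then have "of_int m / of_nat n \<in> D" by simp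
    then show ?thesis by (intro exI[of _ 0]) simp
  next
    case True
    then obtain n' where n: "n = p * n'" by blast
    have p1: "p > 1" using prime_gt_1_nat[OF pp] .
    have "n' > 0" "n' < n" using n less.prems p1 by auto
    then obtain E where E: "(of_nat p)^E * (of_int m / of_nat n') \<in> D" using less.IH by blast
    have "(of_nat p)^(Suc E) * (of_int m / of_nat n) = (of_nat p :: rat)^E * (of_int m / of_nat n')"
      using n p1 by simp
    then show ?thesis using E by metis
  qed
qed

lemma exp_D: "\<exists>E. (of_nat p)^E * c \<in> D"
proof -
  obtain a b where q: "quotient_of c = (a, b)" by fastforce
  have x: "c = of_int a / of_int b" and b: "b > 0"
    using quotient_of_div[OF q] quotient_of_denom_pos[OF q] by auto
  have "c = of_int a / of_nat (nat b)" using x b by simp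
  then show ?thesis using exp_D1[of "nat b" a] b by simp
qed

lemma exp_D_list: "\<exists>E. \<forall>c\<in>set cs. (of_nat p)^E * c \<in> D"
proof (induction cs)
  case Nil then show ?case by simp
next
  case (Cons c cs)
  then obtain E where E: "\<forall>c\<in>set cs. (of_nat p)^E * c \<in> D" by blast
  obtain E' where E': "(of_nat p)^E' * c \<in> D" using exp_D by blast
  have "\<forall>c\<in>set (c#cs). (of_nat p)^(max E E') * c \<in> D"
  proof
    fix x assume "x \<in> set (c#cs)"
    then have "\<exists>F. F \<le> max E E' \<and> (of_nat p)^F * x \<in> D" using E E' by (auto intro: exI[of _ E] exI[of _ E'])
    then obtain F where F: "F \<le> max E E'" "(of_nat p)^F * x \<in> D" by blast
    have eq: "(of_nat p::rat)^(max E E') = of_nat p^(max E E' - F) * of_nat p^F"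
      using F(1) by (simp add: power_add[symmetric])
    have eq2: "(of_nat p)^(max E E') * x = (of_nat p)^(max E E' - F) * ((of_nat p)^F * x)"
      unfolding eq by (simp add: mult.assoc)
    show "(of_nat p)^(max E E') * x \<in> D" by (subst eq2) (rule D_mult[OF D_power[OF D_nat] F(2)])
  qed
  then show ?case by blast
qed

definition dv :: "rat \<Rightarrow> rat \<Rightarrow> bool" where "dv x y \<longleftrightarrow> (\<exists>t\<in>D. y = t * x)"

lemma dv_refl: "dv x x" unfolding dv_def by (intro bexI[of _ 1]) auto
lemma dv_trans: "dv x y \<Longrightarrow> dv y z \<Longrightarrow> dv x z"
  unfolding dv_def by (metis D_mult mult.assoc)
lemma dv_total: "dv x y \<or> dv y x"
proof (cases "x = 0 \<or> y = 0")
  case True then show ?thesis unfolding dv_def by (auto intro: bexI[of _ 0])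
next
  case False
  then show ?thesis using D_valuation[of "y/x"] unfolding dv_def
    by (metis False divide_divide_eq_right nonzero_divide_eq_eq divide_self_if mult.commute times_divide_eq_left)
qed

lemma decomp3:
  assumes "b \<in> D" "c \<in> D" "d \<in> D"
  shows "\<exists>g x1 x2 x3. g \<in> D \<and> x1 \<in> D \<and> x2 \<in> D \<and> x3 \<in> D \<and> b = g*x1 \<and> c = g*x2 \<and> d = g*x3 \<and> (x1 = 1 \<or> x2 = 1 \<or> x3 = 1)"
proof -
  have "\<exists>g \<in> {b,c,d}. dv g b \<and> dv g c \<and> dv g d"
  proof -
    obtain m where m: "m \<in> {b,c}" "dv m b" "dv m c"
      using dv_total[of b c] dv_refl by blast
    show ?thesis
    proof (cases "dv m d")
      case True then show ?thesis using m by blast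
    next
      case False then have "dv d m" using dv_total by blast
      then show ?thesis using m dv_trans dv_refl by blast
    qed
  qed
  then obtain g where g: "g \<in> {b,c,d}" "dv g b" "dv g c" "dv g d" by blast
  then obtain t1 t2 t3 where t: "t1 \<in> D" "t2 \<in> D" "t3 \<in> D" "b = t1*g" "c = t2*g" "d = t3*g"
    unfolding dv_def by blast
  have gD: "g \<in> D" using g(1) assms by auto
  have "g = b \<or> g = c \<or> g = d" using g(1) by auto
  then show ?thesis
  proof (elim disjE)
    assume "g = b" then show ?thesis using t gD by (intro exI[of _ g] exI[of _ 1] exI[of _ t2] exI[of _ t3]) auto
  next
    assume "g = c" then show ?thesis using t gD by (intro exI[of _ g] exI[of _ t1] exI[of _ 1] exI[of _ t3]) auto
  next
    assume "g = d" then show ?thesis using t gD by (intro exI[of _ g] exI[of _ t1] exI[of _ t2] exI[of _ 1]) auto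
  qed
qed

end


context pctx begin

lemma mk2_M2: "mk2 a b c d \<in> M2 p \<longleftrightarrow> a \<in> D \<and> b \<in> D \<and> c \<in> D \<and> d \<in> D"
  unfolding M2_def by (simp add: forall_2)

lemma quat_mem: "Quat a b c d \<in> quat_order p \<longleftrightarrow> a \<in> D \<and> b \<in> D \<and> c \<in> D \<and> d \<in> D"
  unfolding quat_order_def by auto

lemma dir1: "IntQ_M2 p \<subseteq> IntQ_quat p"
proof
  fix f assume f: "f \<in> IntQ_M2 p"
  show "f \<in> IntQ_quat p" unfolding IntQ_quat_def
  proof (intro CollectI ballI)
    fix q assume "q \<in> quat_order p"
    then obtain a b c d where q: "q = Quat a b c d" "a \<in> D" "b \<in> D" "c \<in> D" "d \<in> D"
      unfolding quat_order_def by auto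
    obtain g x1 x2 x3 where dc: "g \<in> D" "x1 \<in> D" "x2 \<in> D" "x3 \<in> D" "b = g*x1" "c = g*x2" "d = g*x3"
      using decomp3[OF q(3-5)] by blast
    define s where "s = x1^2 + x2^2 + x3^2"
    have sD: "s \<in> D" unfolding s_def using dc by simp
    define M where "M = mk2 (a + g*0) (g*1) (g*(-s)) (a - g*0)"
    have "M \<in> M2 p" unfolding M_def mk2_M2 using q dc sD by simp
    then have "meval f M \<in> M2 p" using f unfolding IntQ_M2_def by blast
    moreover have "meval f M = mk2 (fst (H s a g (coeffs f)) + snd (H s a g (coeffs f)) * 0) (snd (H s a g (coeffs f)) * 1)
        (snd (H s a g (coeffs f)) * (-s)) (fst (H s a g (coeffs f)) - snd (H s a g (coeffs f)) * 0)"
      unfolding meval_def M_def by (rule meval_H) simp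
    ultimately have v: "fst (H s a g (coeffs f)) \<in> D" "snd (H s a g (coeffs f)) \<in> D"
      by (auto simp: mk2_M2)
    have "qeval f q = Quat (fst (H s a g (coeffs f))) (snd (H s a g (coeffs f)) * x1) (snd (H s a g (coeffs f)) * x2) (snd (H s a g (coeffs f)) * x3)"
      unfolding qeval_def q dc by (rule qeval_H) (simp add: s_def)
    then show "qeval f q \<in> quat_order p" using v dc by (simp add: quat_mem)
  qed
qed

lemma dir2: "IntQ_quat p \<subseteq> IntQ_M2 p"
proof
  fix f assume f: "f \<in> IntQ_quat p"
  show "f \<in> IntQ_M2 p" unfolding IntQ_M2_def
  proof (intro CollectI ballI)
    fix M assume M: "M \<in> M2 p"
    define a where "a = (M$1$1 + M$2$2)/2"
    define w where "w = (M$1$1 - M$2$2)/2"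
    have ent: "M$1$1 \<in> D" "M$1$2 \<in> D" "M$2$1 \<in> D" "M$2$2 \<in> D" using M unfolding M2_def by auto
    have aD: "a \<in> D" unfolding a_def using ent D_mult[OF _ D_half] by (simp add: divide_inverse_commute[symmetric]) 
    have wD: "w \<in> D" unfolding w_def using ent D_mult[OF _ D_half] by (simp add: divide_inverse_commute[symmetric])
    obtain g z x y where dc: "g \<in> D" "z \<in> D" "x \<in> D" "y \<in> D" "w = g*z" "M$1$2 = g*x" "M$2$1 = g*y"
      "z = 1 \<or> x = 1 \<or> y = 1"
      using decomp3[OF wD ent(2,3)] by blast
    define s where "s = -(z^2 + x*y)"
    have sD: "s \<in> D" unfolding s_def using dc by simp
    have Meq: "M = mk2 (a+g*z) (g*x) (g*y) (a-g*z)"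
      apply (subst mk2_eq) unfolding mk2_inj using dc(5-7) unfolding a_def w_def by (auto simp: field_simps)
    define cs where "cs = coeffs f"
    have mev: "meval f M = mk2 (fst (H s a g cs) + snd (H s a g cs) * z) (snd (H s a g cs) * x) (snd (H s a g cs) * y) (fst (H s a g cs) - snd (H s a g cs) * z)"
      unfolding meval_def Meq cs_def by (rule meval_H) (simp add: s_def)
    obtain E where E: "\<forall>c\<in>set cs. (of_nat p)^E * c \<in> D" using exp_D_list by blast
    obtain b1 b2 b3 where bb: "unit b1" "b2 \<in> D" "b3 \<in> D" "(b1^2+b2^2+b3^2-s)/ (of_nat p)^E \<in> D"
      using density'[OF sD] by blast
    define s' where "s' = b1^2+b2^2+b3^2"
    have b1D: "b1 \<in> D" using bb(1) unit_D by blast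
    have s'D: "s' \<in> D" unfolding s'_def using b1D bb by simp
    have "Quat a (g*b1) (g*b2) (g*b3) \<in> quat_order p" unfolding quat_mem using aD dc b1D bb by simp
    then have "qeval f (Quat a (g*b1) (g*b2) (g*b3)) \<in> quat_order p" using f unfolding IntQ_quat_def by blast
    moreover have "qeval f (Quat a (g*b1) (g*b2) (g*b3)) = Quat (fst (H s' a g cs)) (snd (H s' a g cs) * b1) (snd (H s' a g cs) * b2) (snd (H s' a g cs) * b3)"
      unfolding qeval_def cs_def by (rule qeval_H) (simp add: s'_def)
    ultimately have q1: "fst (H s' a g cs) \<in> D" "snd (H s' a g cs) * b1 \<in> D" by (auto simp: quat_mem)
    have q2: "snd (H s' a g cs) \<in> D"
      using D_mult[OF q1(2) unit_inv[OF bb(1)]] unit_nz[OF bb(1)] by simp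
    have p0: "(of_nat p :: rat)^E \<noteq> 0" using pp by auto
    have cg: "fst (H s' a g cs) - fst (H s a g cs) \<in> D \<and> snd (H s' a g cs) - snd (H s a g cs) \<in> D"
      using H_cong[OF p0 E aD dc(1) s'D sD] bb(4) unfolding s'_def by blast
    have v0: "fst (H s a g cs) \<in> D" using D_diff[OF q1(1) conjunct1[OF cg]] by simp
    have v1: "snd (H s a g cs) \<in> D" using D_diff[OF q2 conjunct2[OF cg]] by simp
    show "meval f M \<in> M2 p" unfolding mev mk2_M2 using v0 v1 dc by simp
  qed
qed

end



fun nrm :: "quat \<Rightarrow> rat" where "nrm (Quat a b c d) = a^2 + b^2 + c^2 + d^2"

lemma nrm_mult: "nrm (qmul x y) = nrm x * nrm y"
  by (cases x; cases y) (simp add: power2_eq_square algebra_simps)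

lemma nrm_zero: "nrm x = 0 \<Longrightarrow> x = Quat 0 0 0 0"
proof (cases x)
  case (Quat a b c d)
  assume "nrm x = 0"
  then have "a^2 + b^2 + c^2 + d^2 = 0" using Quat by simp
  moreover have "a^2 \<ge> 0" "b^2 \<ge> 0" "c^2 \<ge> 0" "d^2 \<ge> 0" by auto
  ultimately have "a^2 = 0" "b^2 = 0" "c^2 = 0" "d^2 = 0" by linarith+
  then show ?thesis using Quat by simp
qed

lemma quat_nozd: "qmul x y = Quat 0 0 0 0 \<Longrightarrow> x = Quat 0 0 0 0 \<or> y = Quat 0 0 0 0"
  using nrm_mult[of x y] nrm_zero by (metis mult_eq_0_iff nrm.simps power_zero_numeral add_0)

context pctx begin

lemma qmul_closed: "x \<in> quat_order p \<Longrightarrow> y \<in> quat_order p \<Longrightarrow> qmul x y \<in> quat_order p"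
  by (cases x; cases y) (simp add: quat_mem)

lemma not_iso:
  "\<not> (\<exists>\<phi> :: quat \<Rightarrow> rat^2^2.
          bij_betw \<phi> (quat_order p) (M2 p) \<and>
          (\<forall>x \<in> quat_order p. \<forall>y \<in> quat_order p.
              \<phi> (qadd x y) = \<phi> x + \<phi> y \<and> \<phi> (qmul x y) = \<phi> x ** \<phi> y) \<and>
          \<phi> qone = mat 1)"
proof
  assume "\<exists>\<phi> :: quat \<Rightarrow> rat^2^2.
          bij_betw \<phi> (quat_order p) (M2 p) \<and>
          (\<forall>x \<in> quat_order p. \<forall>y \<in> quat_order p.
              \<phi> (qadd x y) = \<phi> x + \<phi> y \<and> \<phi> (qmul x y) = \<phi> x ** \<phi> y) \<and>
          \<phi> qone = mat 1"
  then obtain \<phi> :: "quat \<Rightarrow> rat^2^2" where bij: "bij_betw \<phi> (quat_order p) (M2 p)"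
    and hom: "\<forall>x \<in> quat_order p. \<forall>y \<in> quat_order p.
              \<phi> (qadd x y) = \<phi> x + \<phi> y \<and> \<phi> (qmul x y) = \<phi> x ** \<phi> y" by blast
  define Z where "Z = Quat 0 0 0 0"
  have Z: "Z \<in> quat_order p" unfolding Z_def quat_mem by simp
  have "\<phi> (qadd Z Z) = \<phi> Z + \<phi> Z" using hom Z by blast
  moreover have "qadd Z Z = Z" unfolding Z_def by simp
  ultimately have phiZ: "\<phi> Z = mk2 0 0 0 0"
    by (simp add: vec_eq_iff forall_2)
  have E1: "mk2 1 0 0 0 \<in> M2 p" and E2: "mk2 0 0 0 1 \<in> M2 p" unfolding mk2_M2 by simp_all
  obtain x where x: "x \<in> quat_order p" "\<phi> x = mk2 1 0 0 0"
    using E1 bij unfolding bij_betw_def by (metis imageE)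
  obtain y where y: "y \<in> quat_order p" "\<phi> y = mk2 0 0 0 1"
    using E2 bij unfolding bij_betw_def by (metis imageE)
  have "\<phi> (qmul x y) = mk2 1 0 0 0 ** mk2 0 0 0 1" using hom x y by simp
  also have "\<dots> = \<phi> Z" unfolding phiZ mk2_mult by simp
  finally have "qmul x y = Z"
    using bij qmul_closed[OF x(1) y(1)] Z unfolding bij_betw_def inj_on_def by blast
  then have "x = Z \<or> y = Z" using quat_nozd unfolding Z_def by blast
  then show False using x y phiZ by (auto simp: mk2_inj)
qed

end

theorem mainTheorem13:
  fixes p :: nat
  assumes "prime p" and "odd p"
  shows "IntQ_quat p = IntQ_M2 p \<and>
    \<not> (\<exists>\<phi> :: quat \<Rightarrow> rat^2^2.
          bij_betw \<phi> (quat_order p) (M2 p) \<and>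
          (\<forall>x \<in> quat_order p. \<forall>y \<in> quat_order p.
              \<phi> (qadd x y) = \<phi> x + \<phi> y \<and> \<phi> (qmul x y) = \<phi> x ** \<phi> y) \<and>
          \<phi> qone = mat 1)"
proof -
  interpret pctx p using assms by unfold_locales
  show ?thesis using dir1 dir2 not_iso by blast
qed



end
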